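(* Let $\kappa\neq0$ and let $S=\{(x(s),t,z(s)) : s,t\in\mathbb R\}\subset\mathbb R^3$ be a $\kappa$-cylindrical surface, where $(x,z,\theta)$ solves $x'=\cos\theta$, $z'=\sin\theta$, $\theta'=\kappa z$ on $\mathbb R$. Then $S$ is symmetric with respect to any vertical plane parallel to the rulings (i.e. any plane $\{x=x(s_0)\}$) passing through a point where the height function $z$ attains an extremum (i.e. where $z'(s_0)=0$, equivalently $\cos\theta(s_0)=\pm1$).
   Context: A $\kappa$-cylindrical surface ($\kappa\ne 0$ constant) is a cylindrical ruled surface in $\mathbb R^3$ that locally satisfies the capillary equation $\operatorname{div}\big(Du/\sqrt{1+|Du|^2}\big)=\kappa u$, i.e. its mean curvature equals $\kappa z/2$. Such a surface has horizontal rulings (here parallel to the $y$-axis) and can be written $(x(s),t,z(s))$ where the directrix $\alpha=(x,z)$ is parametrized by arc length, $\theta$ is the angle between $\partial/\partial x$ and $\alpha'$, and $(x,z,\theta)$ satisfies $x'=\cos\theta$, $z'=\sin\theta$, $\theta'=\kappa z$. The height $z$ is measured with respect to the horizontal plane $\Pi=\{z=0\}$. *)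

theory Defs
  imports "HOL-Analysis.Analysis"
begin

definition kappa_cyl_solution ::
  "real \<Rightarrow> (real \<Rightarrow> real) \<Rightarrow> (real \<Rightarrow> real) \<Rightarrow> (real \<Rightarrow> real) \<Rightarrow> bool" where
  "kappa_cyl_solution \<kappa> x z \<theta> \<longleftrightarrow>
     (\<forall>s. (x has_real_derivative cos (\<theta> s)) (at s)) \<and>
     (\<forall>s. (z has_real_derivative sin (\<theta> s)) (at s)) \<and>
     (\<forall>s. (\<theta> has_real_derivative \<kappa> * z s) (at s))"

definition cyl_surface :: "(real \<Rightarrow> real) \<Rightarrow> (real \<Rightarrow> real) \<Rightarrow> (real \<times> real \<times> real) set" where
  "cyl_surface x z = {(x s, t, z s) | s t. True}"

definition reflect_x :: "real \<Rightarrow> real \<times> real \<times> real \<Rightarrow> real \<times> real \<times> real" where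
  "reflect_x a p = (2 * a - fst p, fst (snd p), snd (snd p))"

end

theory Submission
  imports Defs
begin

lemma cos_lip: "\<bar>cos (a::real) - cos b\<bar> \<le> \<bar>a - b\<bar>"
proof -
  have "\<bar>cos a - cos b\<bar> = 2 * \<bar>sin ((a + b) / 2)\<bar> * \<bar>sin ((b - a) / 2)\<bar>"
    by (simp add: cos_diff_cos abs_mult)
  also have "\<dots> \<le> 2 * 1 * \<bar>(b - a) / 2\<bar>"
    by (intro mult_mono abs_sin_x_le_abs_x) auto
  finally show ?thesis by simp
qed

lemma sin_lip: "\<bar>sin (a::real) - sin b\<bar> \<le> \<bar>a - b\<bar>"
proof -
  have "\<bar>sin a - sin b\<bar> = 2 * \<bar>sin ((a - b) / 2)\<bar> * \<bar>cos ((a + b) / 2)\<bar>"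
    by (simp add: sin_diff_sin abs_mult)
  also have "\<dots> \<le> 2 * \<bar>(a - b) / 2\<bar> * 1"
    by (intro mult_mono abs_sin_x_le_abs_x) auto
  finally show ?thesis by simp
qed

lemma key_ineq:
  fixes p q r c1 c2 e1 d2 k :: real
  assumes "\<bar>c1\<bar> \<le> \<bar>r\<bar>" "\<bar>e1\<bar> \<le> \<bar>r\<bar>"
  shows "\<bar>2*p*c1 + 2*q*e1 + 2*r*(k*q)\<bar> \<le> (2 + \<bar>k\<bar>) * (p^2 + q^2 + r^2)"
proof -
  have a: "\<bar>2*p*c1\<bar> \<le> 2*\<bar>p\<bar>*\<bar>r\<bar>" using assms
    by (simp add: abs_mult mult_left_mono)
  have b: "\<bar>2*q*e1\<bar> \<le> 2*\<bar>q\<bar>*\<bar>r\<bar>" using assms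
    by (simp add: abs_mult mult_left_mono)
  have c: "\<bar>2*r*(k*q)\<bar> = \<bar>k\<bar> * (2*\<bar>q\<bar>*\<bar>r\<bar>)" by (simp add: abs_mult)
  have uw: "2*\<bar>p\<bar>*\<bar>r\<bar> \<le> p^2 + r^2"
    using sum_squares_ge_zero[of "\<bar>p\<bar> - \<bar>r\<bar>" 0] by (simp add: power2_eq_square algebra_simps)
  have vw: "2*\<bar>q\<bar>*\<bar>r\<bar> \<le> q^2 + r^2"
    using sum_squares_ge_zero[of "\<bar>q\<bar> - \<bar>r\<bar>" 0] by (simp add: power2_eq_square algebra_simps)
  have m1: "\<bar>k\<bar> * (2*\<bar>q\<bar>*\<bar>r\<bar>) \<le> \<bar>k\<bar> * (q^2 + r^2)" using vw by (simp add: mult_left_mono)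
  have m2: "\<bar>k\<bar> * (q^2 + r^2) \<le> \<bar>k\<bar> * (p^2 + q^2 + r^2)" by (simp add: mult_left_mono)
  have t: "\<bar>2*p*c1 + 2*q*e1 + 2*r*(k*q)\<bar> \<le> \<bar>2*p*c1\<bar> + \<bar>2*q*e1\<bar> + \<bar>2*r*(k*q)\<bar>"
    by (meson abs_triangle_ineq add_mono order_trans order_refl)
  have e: "(2 + \<bar>k\<bar>) * (p^2 + q^2 + r^2) = 2*(p^2 + q^2 + r^2) + \<bar>k\<bar> * (p^2 + q^2 + r^2)"
    by (simp add: algebra_simps)
  have "0 \<le> p^2" "0 \<le> q^2" "0 \<le> r^2" by auto
  have f: "(p^2 + r^2) + (q^2 + r^2) + \<bar>k\<bar> * (p^2 + q^2 + r^2) \<le> (2 + \<bar>k\<bar>) * (p^2 + q^2 + r^2)"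
    unfolding e by (rule add_right_mono) simp
  have "\<bar>2*p*c1 + 2*q*e1 + 2*r*(k*q)\<bar> \<le> 2*\<bar>p\<bar>*\<bar>r\<bar> + 2*\<bar>q\<bar>*\<bar>r\<bar> + \<bar>k\<bar> * (2*\<bar>q\<bar>*\<bar>r\<bar>)"
    using a b c t by linarith
  also have "\<dots> \<le> (p^2 + r^2) + (q^2 + r^2) + \<bar>k\<bar> * (p^2 + q^2 + r^2)"
    using uw vw m1 m2 by linarith
  finally show ?thesis using f by linarith
qed

lemma uniq:
  fixes k :: real and x z th X Z T :: "real \<Rightarrow> real"
  assumes S1: "kappa_cyl_solution k x z th" and S2: "kappa_cyl_solution k X Z T"
    and i1: "x s0 = X s0" and i2: "z s0 = Z s0" and i3: "th s0 = T s0"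
  shows "x s = X s \<and> z s = Z s \<and> th s = T s"
proof -
  define E where "E s = (x s - X s)^2 + (z s - Z s)^2 + (th s - T s)^2" for s
  define E' where "E' s = 2*(x s - X s)*(cos (th s) - cos (T s)) + 2*(z s - Z s)*(sin (th s) - sin (T s))
      + 2*(th s - T s)*(k*(z s - Z s))" for s
  define L where "L = 2 + \<bar>k\<bar>"
  have dx: "\<And>s. (x has_real_derivative cos (th s)) (at s)" "\<And>s. (z has_real_derivative sin (th s)) (at s)"
    "\<And>s. (th has_real_derivative k * z s) (at s)" using S1 unfolding kappa_cyl_solution_def by auto
  have dX: "\<And>s. (X has_real_derivative cos (T s)) (at s)" "\<And>s. (Z has_real_derivative sin (T s)) (at s)"
    "\<And>s. (T has_real_derivative k * Z s) (at s)" using S2 unfolding kappa_cyl_solution_def by auto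
  have dE: "(E has_real_derivative E' s) (at s)" for s
    unfolding E_def[abs_def] E'_def
    by (auto intro!: derivative_eq_intros dx dX simp: algebra_simps power2_eq_square)
  have Enn: "0 \<le> E s" for s unfolding E_def by simp
  have bnd: "\<bar>E' s\<bar> \<le> L * E s" for s
    unfolding E'_def E_def L_def
    by (rule key_ineq) (simp_all add: cos_lip sin_lip)
  have E0: "E s0 = 0" unfolding E_def using i1 i2 i3 by simp
  have "E s \<le> 0"
  proof (cases "s0 \<le> s")
    case True
    have "E s * exp (- L * s) \<le> E s0 * exp (- L * s0)"
    proof (rule DERIV_nonpos_imp_nonincreasing[OF True, where f="\<lambda>s. E s * exp (- L * s)"])
      fix t
      have "((\<lambda>s. E s * exp (- L * s)) has_real_derivative E' t * exp (- L * t) + E t * (exp (- L * t) * (- L))) (at t)"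
        by (auto intro!: derivative_eq_intros dE)
      moreover have "E' t * exp (- L * t) + E t * (exp (- L * t) * (- L)) = (E' t - L * E t) * exp (- L * t)"
        by (simp add: algebra_simps)
      moreover have "(E' t - L * E t) * exp (- L * t) \<le> 0"
        using bnd[of t] by (intro mult_nonpos_nonneg) auto
      ultimately show "\<exists>y. ((\<lambda>s. E s * exp (- L * s)) has_real_derivative y) (at t) \<and> y \<le> 0" by auto
    qed
    then have "E s * exp (- L * s) \<le> 0" using E0 by simp
    then show ?thesis by (simp add: mult_le_0_iff)
  next
    case False
    then have le: "s \<le> s0" by simp
    have "E s * exp (L * s) \<le> E s0 * exp (L * s0)"
    proof (rule DERIV_nonneg_imp_nondecreasing[OF le, where f="\<lambda>s. E s * exp (L * s)"])
      fix t
      have "((\<lambda>s. E s * exp (L * s)) has_real_derivative E' t * exp (L * t) + E t * (exp (L * t) * L)) (at t)"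
        by (auto intro!: derivative_eq_intros dE)
      moreover have "E' t * exp (L * t) + E t * (exp (L * t) * L) = (E' t + L * E t) * exp (L * t)"
        by (simp add: algebra_simps)
      moreover have "0 \<le> (E' t + L * E t) * exp (L * t)"
        using bnd[of t] by (intro mult_nonneg_nonneg) auto
      ultimately show "\<exists>y. ((\<lambda>s. E s * exp (L * s)) has_real_derivative y) (at t) \<and> y \<ge> 0" by auto
    qed
    then have "E s * exp (L * s) \<le> 0" using E0 by simp
    then show ?thesis by (simp add: mult_le_0_iff)
  qed
  then have "E s = 0" using Enn[of s] by simp
  then show ?thesis unfolding E_def
    by (smt (verit) zero_le_power2 zero_eq_power2)
qed

theorem mainTheorem2:
  fixes \<kappa> :: real and x z \<theta> :: "real \<Rightarrow> real" and s\<^sub>0 :: real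
  assumes "\<kappa> \<noteq> 0"
    and "kappa_cyl_solution \<kappa> x z \<theta>"
    and "deriv z s\<^sub>0 = 0"
  shows "reflect_x (x s\<^sub>0) ` cyl_surface x z = cyl_surface x z"
proof -
  note S = assms(2)
  have dx: "\<And>s. (x has_real_derivative cos (\<theta> s)) (at s)" "\<And>s. (z has_real_derivative sin (\<theta> s)) (at s)"
    "\<And>s. (\<theta> has_real_derivative \<kappa> * z s) (at s)" using S unfolding kappa_cyl_solution_def by auto
  have "deriv z s\<^sub>0 = sin (\<theta> s\<^sub>0)" using dx(2) by (rule DERIV_imp_deriv)
  then have s0: "sin (\<theta> s\<^sub>0) = 0" using assms(3) by simp
  then have c0: "(cos (\<theta> s\<^sub>0))^2 = 1" using sin_cos_squared_add[of "\<theta> s\<^sub>0"] by simp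
  have s2: "sin (2 * \<theta> s\<^sub>0) = 0" using s0 by (simp add: sin_double)
  have c2: "cos (2 * \<theta> s\<^sub>0) = 1" using s0 c0 by (simp add: cos_double)
  have cr: "cos (2 * \<theta> s\<^sub>0 - a) = cos a" for a by (simp add: cos_diff s2 c2)
  have sr: "sin (2 * \<theta> s\<^sub>0 - a) = - sin a" for a by (simp add: sin_diff s2 c2)
  define X where "X s = 2 * x s\<^sub>0 - x (2 * s\<^sub>0 - s)" for s
  define Z where "Z s = z (2 * s\<^sub>0 - s)" for s
  define T where "T s = 2 * \<theta> s\<^sub>0 - \<theta> (2 * s\<^sub>0 - s)" for s
  have ref: "((\<lambda>s. 2 * s\<^sub>0 - s) has_real_derivative -1) (at s)" for s
    by (auto intro!: derivative_eq_intros)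
  have "kappa_cyl_solution \<kappa> X Z T"
    unfolding kappa_cyl_solution_def
  proof (intro conjI allI)
    fix s
    have "((\<lambda>s. x (2 * s\<^sub>0 - s)) has_real_derivative cos (\<theta> (2 * s\<^sub>0 - s)) * -1) (at s)"
      by (rule DERIV_chain2[OF dx(1) ref])
    then have "(X has_real_derivative 0 - cos (\<theta> (2 * s\<^sub>0 - s)) * -1) (at s)"
      unfolding X_def[abs_def] by (intro DERIV_diff) auto
    then show "(X has_real_derivative cos (T s)) (at s)" unfolding T_def cr by simp
  next
    fix s
    have "((\<lambda>s. z (2 * s\<^sub>0 - s)) has_real_derivative sin (\<theta> (2 * s\<^sub>0 - s)) * -1) (at s)"
      by (rule DERIV_chain2[OF dx(2) ref])
    then show "(Z has_real_derivative sin (T s)) (at s)" unfolding T_def sr Z_def[abs_def] by simp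
  next
    fix s
    have "((\<lambda>s. \<theta> (2 * s\<^sub>0 - s)) has_real_derivative \<kappa> * z (2 * s\<^sub>0 - s) * -1) (at s)"
      by (rule DERIV_chain2[OF dx(3) ref])
    then have "(T has_real_derivative 0 - \<kappa> * z (2 * s\<^sub>0 - s) * -1) (at s)"
      unfolding T_def[abs_def] by (intro DERIV_diff) auto
    then show "(T has_real_derivative \<kappa> * Z s) (at s)" unfolding Z_def by simp
  qed
  then have eq: "x s = X s \<and> z s = Z s" for s
    using uniq[OF S, of X Z T s\<^sub>0 s] unfolding X_def Z_def T_def by simp
  have ex: "2 * x s\<^sub>0 - x s = x (2 * s\<^sub>0 - s)" for s using eq[of s] unfolding X_def by simp
  have ez: "z s = z (2 * s\<^sub>0 - s)" for s using eq[of s] unfolding Z_def by simp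
  show ?thesis
  proof
    show "reflect_x (x s\<^sub>0) ` cyl_surface x z \<subseteq> cyl_surface x z"
    proof
      fix p assume "p \<in> reflect_x (x s\<^sub>0) ` cyl_surface x z"
      then obtain s t where p: "p = reflect_x (x s\<^sub>0) (x s, t, z s)"
        unfolding cyl_surface_def by auto
      have "p = (x (2 * s\<^sub>0 - s), t, z (2 * s\<^sub>0 - s))"
        unfolding p reflect_x_def using ex[of s] ez[of s] by simp
      then show "p \<in> cyl_surface x z" unfolding cyl_surface_def by blast
    qed
  next
    show "cyl_surface x z \<subseteq> reflect_x (x s\<^sub>0) ` cyl_surface x z"
    proof
      fix p assume "p \<in> cyl_surface x z"
      then obtain s t where p: "p = (x s, t, z s)"
        unfolding cyl_surface_def by auto
      have "p = reflect_x (x s\<^sub>0) (x (2 * s\<^sub>0 - s), t, z (2 * s\<^sub>0 - s))"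
        unfolding p reflect_x_def using ex[of "2 * s\<^sub>0 - s"] ez[of s] by simp
      moreover have "(x (2 * s\<^sub>0 - s), t, z (2 * s\<^sub>0 - s)) \<in> cyl_surface x z"
        unfolding cyl_surface_def by blast
      ultimately show "p \<in> reflect_x (x s\<^sub>0) ` cyl_surface x z" by blast
    qed
  qed
qed

end
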